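(* Let $p\ge3$ and consider the dynamic panel logit AR($p$) model with $T=4$: binary outcomes $Y_{1-p},\dots,Y_0,Y_1,\dots,Y_4\in\{0,1\}$, regressors $X=(X_1,\dots,X_4)\in\mathbb{R}^{K\times4}$, fixed effect $A\in\mathbb{R}$, with, for $t\in\{1,\dots,4\}$, $$\Pr(Y_t=1\mid Y_{1-p},\dots,Y_{t-1},X,A)=\frac{\exp(X_t'\beta_0+\sum_{\ell=1}^pY_{t-\ell}\gamma_{0,\ell}+A)}{1+\exp(X_t'\beta_0+\sum_{\ell=1}^pY_{t-\ell}\gamma_{0,\ell}+A)}$$ and true parameters $\beta_0\in\mathbb{R}^K$, $\gamma_0\in\mathbb{R}^p$. Let $Y^{(0)}=(Y_{1-p},\dots,Y_0)$, $0_p$ the $p$-vector of zeros, $x_{ts}=x_t-x_s$, and for $y=(y_1,\dots,y_4)\in\{0,1\}^4$, $x=(x_1,x_2,x_3,x_3)$, $\beta\in\mathbb{R}^K$, $\gamma\in\mathbb{R}^p$ define $$m^{(a)}=\begin{cases}e^{x_{23}'\beta}&y=(0,0,1,0),\\ e^{x_{23}'\beta-\gamma_1}&y=(0,0,1,1),\\ -1&(y_1,y_2,y_3)=(0,1,0),\\0&\text{otherwise},\end{cases}\qquad m^{(b)}=\begin{cases}e^{x_{12}'\beta}&(y_1,y_2,y_3)=(0,1,0),\\ e^{x_{12}'\beta}[1+e^{x_{23}'\beta-\gamma_1}-e^{\gamma_2}]&y=(0,1,1,0),\\ e^{x_{13}'\beta-\gamma_1-\gamma_2}&y=(0,1,1,1),\\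 -1&(y_1,y_2)=(1,0),\\ e^{x_{32}'\beta+\gamma_2}-1&(y_1,y_2,y_3)=(1,1,0),\\0&\text{otherwise},\end{cases}$$ $$m^{(c)}=\begin{cases}-e^{\gamma_1}&y=(0,0,1,0),\\ -1&y=(0,0,1,1),\\ e^{x_{32}'\beta}[e^{\gamma_1}-e^{\gamma_2}]&y=(0,1,0,0),\\ e^{\gamma_1-\gamma_2}-1&y=(0,1,0,1),\\ -1&(y_1,y_2,y_3)=(0,1,1),\\ e^{x_{31}'\beta+\gamma_2}&(y_1,y_2,y_3)=(1,0,0),\\ e^{x_{21}'\beta+\gamma_1}&(y_1,y_2,y_3)=(1,0,1),\\0&\text{otherwise}.\end{cases}$$ Then for all $(x_1,x_2,x_3)\in\mathbb{R}^{K\times3}$, $\alpha\in\mathbb{R}$ and $\xi\in\{a,b,c\}$, $$\mathbb{E}\big[m^{(\xi)}(Y,X,\beta_0,\gamma_0)\mid Y^{(0)}=0_p,X=(x_1,x_2,x_3,x_3),A=\alpha\big]=0,$$ where $Y=(Y_1,\dots,Y_4)$.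
   Context: The joint distribution of $(Y^{(0)},X,A)$ is unrestricted; only the conditional law of $(Y_1,\dots,Y_4)$ given $(Y^{(0)},X,A)$ is specified by the model. The paper defines $m^{(a)}$ as $\mathbb{1}(y_1=0)$ times the $T=3$ moment function for initial condition $0_p$ applied to $(y_2,y_3,y_4)$ and regressors $(x_2,x_3,x_3)$, and $m^{(b)}$ as the AR(2), $T=4$ moment function $m^{(d)}_{(0,0)}$ evaluated at $x=(x_1,x_2,x_3,x_3)$ and $(\gamma_1,\gamma_2)$; the displayed formulas are these functions written out explicitly (with $x_4=x_3$ substituted). *)

theory Defs
  imports "HOL-Analysis.Analysis"
begin

text \<open>Dynamic panel logit AR(p) model with T = 4. Time is indexed by integers;
  outcomes in periods 1..4 are given by a list ys of length 4 with entries in {0,1}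
  (ys ! (t-1) is y_t); the initial condition Y^(0) = (Y_{1-p},...,Y_0) is a function y0
  on periods \<le> 0. Regressors X_t (t = 1..4) are vectors in real^'k.\<close>

definition logistic :: "real \<Rightarrow> real" where
  "logistic z = exp z / (1 + exp z)"

definition hist :: "(int \<Rightarrow> real) \<Rightarrow> nat list \<Rightarrow> int \<Rightarrow> real" where
  "hist y0 ys t = (if t \<le> 0 then y0 t else real (ys ! nat (t - 1)))"

definition lin_index :: "nat \<Rightarrow> real^'k \<Rightarrow> (nat \<Rightarrow> real) \<Rightarrow> (int \<Rightarrow> real^'k) \<Rightarrow> real
    \<Rightarrow> (int \<Rightarrow> real) \<Rightarrow> nat list \<Rightarrow> int \<Rightarrow> real" where
  "lin_index p \<beta> \<gamma> X \<alpha> y0 ys t =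
     X t \<bullet> \<beta> + (\<Sum>l = 1..p. hist y0 ys (t - int l) * \<gamma> l) + \<alpha>"

definition path_prob :: "nat \<Rightarrow> real^'k \<Rightarrow> (nat \<Rightarrow> real) \<Rightarrow> (int \<Rightarrow> real^'k) \<Rightarrow> real
    \<Rightarrow> (int \<Rightarrow> real) \<Rightarrow> nat list \<Rightarrow> real" where
  "path_prob p \<beta> \<gamma> X \<alpha> y0 ys =
     (\<Prod>t\<in>{1..4::int}.
        (if ys ! nat (t - 1) = 1 then logistic (lin_index p \<beta> \<gamma> X \<alpha> y0 ys t)
         else 1 - logistic (lin_index p \<beta> \<gamma> X \<alpha> y0 ys t)))"

definition outcomes4 :: "nat list set" where
  "outcomes4 = {ys. length ys = 4 \<and> set ys \<subseteq> {0, 1}}"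

definition cond_exp :: "nat \<Rightarrow> real^'k \<Rightarrow> (nat \<Rightarrow> real) \<Rightarrow> (int \<Rightarrow> real^'k) \<Rightarrow> real
    \<Rightarrow> (int \<Rightarrow> real) \<Rightarrow> (nat list \<Rightarrow> real) \<Rightarrow> real" where
  "cond_exp p \<beta> \<gamma> X \<alpha> y0 m = (\<Sum>ys\<in>outcomes4. path_prob p \<beta> \<gamma> X \<alpha> y0 ys * m ys)"

definition m_a :: "real^'k \<Rightarrow> real^'k \<Rightarrow> real^'k \<Rightarrow> real^'k \<Rightarrow> (nat \<Rightarrow> real) \<Rightarrow> nat list \<Rightarrow> real" where
  "m_a x1 x2 x3 \<beta> \<gamma> ys =
     (if ys = [0,0,1,0] then exp ((x2 - x3) \<bullet> \<beta>)
      else if ys = [0,0,1,1] then exp ((x2 - x3) \<bullet> \<beta> - \<gamma> 1)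
      else if take 3 ys = [0,1,0] then -1
      else 0)"

definition m_b :: "real^'k \<Rightarrow> real^'k \<Rightarrow> real^'k \<Rightarrow> real^'k \<Rightarrow> (nat \<Rightarrow> real) \<Rightarrow> nat list \<Rightarrow> real" where
  "m_b x1 x2 x3 \<beta> \<gamma> ys =
     (if take 3 ys = [0,1,0] then exp ((x1 - x2) \<bullet> \<beta>)
      else if ys = [0,1,1,0] then
        exp ((x1 - x2) \<bullet> \<beta>) * (1 + exp ((x2 - x3) \<bullet> \<beta> - \<gamma> 1) - exp (\<gamma> 2))
      else if ys = [0,1,1,1] then exp ((x1 - x3) \<bullet> \<beta> - \<gamma> 1 - \<gamma> 2)
      else if take 2 ys = [1,0] then -1
      else if take 3 ys = [1,1,0] then exp ((x3 - x2) \<bullet> \<beta> + \<gamma> 2) - 1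
      else 0)"

definition m_c :: "real^'k \<Rightarrow> real^'k \<Rightarrow> real^'k \<Rightarrow> real^'k \<Rightarrow> (nat \<Rightarrow> real) \<Rightarrow> nat list \<Rightarrow> real" where
  "m_c x1 x2 x3 \<beta> \<gamma> ys =
     (if ys = [0,0,1,0] then - exp (\<gamma> 1)
      else if ys = [0,0,1,1] then -1
      else if ys = [0,1,0,0] then exp ((x3 - x2) \<bullet> \<beta>) * (exp (\<gamma> 1) - exp (\<gamma> 2))
      else if ys = [0,1,0,1] then exp (\<gamma> 1 - \<gamma> 2) - 1
      else if take 3 ys = [0,1,1] then -1
      else if take 3 ys = [1,0,0] then exp ((x3 - x1) \<bullet> \<beta> + \<gamma> 2)
      else if take 3 ys = [1,0,1] then exp ((x2 - x1) \<bullet> \<beta> + \<gamma> 1)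
      else 0)"

definition Xpath :: "real^'k \<Rightarrow> real^'k \<Rightarrow> real^'k \<Rightarrow> int \<Rightarrow> real^'k" where
  "Xpath x1 x2 x3 t = (if t = 1 then x1 else if t = 2 then x2 else x3)"

end

theory Submission imports Defs begin

lemma outcomes4_eq: "outcomes4 = {[a,b,c,d] | a b c d. a \<in> {0,1} \<and> b \<in> {0,1} \<and> c \<in> {0,1} \<and> d \<in> {0,1}}"
  unfolding outcomes4_def
  apply (rule set_eqI; rule iffI)
   apply (auto simp: length_Suc_conv numeral_eq_Suc)
  done

lemma outcomes4_list: "outcomes4 = set [[a,b,c,d]. a <- [0,1], b <- [0,1], c <- [0,1], d <- [0,1]]"
  unfolding outcomes4_eq by auto

lemma sum_hist:
  assumes "p \<ge> 3" "t \<in> {1..4::int}"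
  shows "(\<Sum>l = 1..p. hist (\<lambda>_. 0) ys (t - int l) * \<gamma> l) =
     (\<Sum>l = 1..3. hist (\<lambda>_. 0) ys (t - int l) * \<gamma> l)"
proof -
  have "{1..p} = {1..3} \<union> {4..p}" using assms by auto
  hence "(\<Sum>l = 1..p. hist (\<lambda>_. 0) ys (t - int l) * \<gamma> l) =
     (\<Sum>l = 1..3. hist (\<lambda>_. 0) ys (t - int l) * \<gamma> l) + (\<Sum>l = 4..p. hist (\<lambda>_. 0) ys (t - int l) * \<gamma> l)"
    by (simp add: sum.union_disjoint)
  moreover have "(\<Sum>l = 4..p. hist (\<lambda>_. 0) ys (t - int l) * \<gamma> l) = 0"
    using assms by (intro sum.neutral) (auto simp: hist_def)
  ultimately show ?thesis by simp
qed

lemma s3: "(\<Sum>l = 1..3::nat. f l) = f 1 + f 2 + (f 3::real)"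
  by (simp add: numeral_eq_Suc)

lemma pp:
  assumes "p \<ge> 3"
  shows "path_prob p \<beta> \<gamma> X \<alpha> (\<lambda>_. 0) ys = 
    (\<Prod>t\<in>{1..4::int}.
        (if ys ! nat (t - 1) = 1 then logistic (X t \<bullet> \<beta> + (hist (\<lambda>_. 0) ys (t - 1) * \<gamma> 1 + hist (\<lambda>_. 0) ys (t - 2) * \<gamma> 2 + hist (\<lambda>_. 0) ys (t - 3) * \<gamma> 3) + \<alpha>)
         else 1 - logistic (X t \<bullet> \<beta> + (hist (\<lambda>_. 0) ys (t - 1) * \<gamma> 1 + hist (\<lambda>_. 0) ys (t - 2) * \<gamma> 2 + hist (\<lambda>_. 0) ys (t - 3) * \<gamma> 3) + \<alpha>)))"
  unfolding path_prob_def lin_index_def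
  apply (rule prod.cong[OF refl])
  subgoal for t using sum_hist[OF assms, of t ys \<gamma>] by (simp only: s3 of_nat_1 of_nat_numeral)
  done

lemma l1: "1 - logistic z = 1 / (1 + exp z)"
proof -
  have "1 + exp z \<noteq> 0" by (smt (verit) exp_gt_zero)
  thus ?thesis unfolding logistic_def by (simp add: field_simps)
qed

lemma ints: "{1..4::int} = {1,2,3,4}" by auto

lemma lg1: "logistic z = exp z / (1 + exp z)" by (simp add: logistic_def)
lemma ne: "0 < (x::real) \<Longrightarrow> 1 + x \<noteq> 0" by simp

lemma test_a:
  assumes "p \<ge> 3"
  shows "cond_exp p \<beta>0 \<gamma>0 (Xpath x1 x2 x3) \<alpha> (\<lambda>_. 0) (m_a x1 x2 x3 \<beta>0 \<gamma>0) = 0"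
proof -
  obtain a b1 b2 b3 g1 g2 g3 where d: "exp \<alpha> = a" "exp (x1 \<bullet> \<beta>0) = b1" "exp (x2 \<bullet> \<beta>0) = b2" "exp (x3 \<bullet> \<beta>0) = b3"
     "exp (\<gamma>0 (Suc 0)) = g1" "exp (\<gamma>0 2) = g2" "exp (\<gamma>0 3) = g3" by blast
  have pos: "a > 0" "b1 > 0" "b2 > 0" "b3 > 0" "g1 > 0" "g2 > 0" "g3 > 0" using d by auto
  have nz: "a \<noteq> 0" "b1 \<noteq> 0" "b2 \<noteq> 0" "b3 \<noteq> 0" "g1 \<noteq> 0" "g2 \<noteq> 0" "g3 \<noteq> 0" using pos by auto
  show ?thesis
  unfolding cond_exp_def pp[OF assms] outcomes4_list
  apply (simp add: ints hist_def m_a_def Xpath_def l1 lg1 inner_diff_left exp_add exp_diff)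
  apply (simp only: d)
  apply (simp add: divide_simps ne pos nz zero_less_mult_iff)
  apply (simp add: algebra_simps)
  done
qed
lemma test_b:
  assumes "p \<ge> 3"
  shows "cond_exp p \<beta>0 \<gamma>0 (Xpath x1 x2 x3) \<alpha> (\<lambda>_. 0) (m_b x1 x2 x3 \<beta>0 \<gamma>0) = 0"
proof -
  obtain a b1 b2 b3 g1 g2 g3 where d: "exp \<alpha> = a" "exp (x1 \<bullet> \<beta>0) = b1" "exp (x2 \<bullet> \<beta>0) = b2" "exp (x3 \<bullet> \<beta>0) = b3"
     "exp (\<gamma>0 (Suc 0)) = g1" "exp (\<gamma>0 2) = g2" "exp (\<gamma>0 3) = g3" by blast
  have pos: "a > 0" "b1 > 0" "b2 > 0" "b3 > 0" "g1 > 0" "g2 > 0" "g3 > 0" using d by auto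
  have nz: "a \<noteq> 0" "b1 \<noteq> 0" "b2 \<noteq> 0" "b3 \<noteq> 0" "g1 \<noteq> 0" "g2 \<noteq> 0" "g3 \<noteq> 0" using pos by auto
  show ?thesis
  unfolding cond_exp_def pp[OF assms] outcomes4_list
  apply (simp add: ints hist_def m_b_def Xpath_def l1 lg1 inner_diff_left exp_add exp_diff)
  apply (simp only: d)
  apply (simp add: divide_simps ne pos nz zero_less_mult_iff)
  apply (simp add: algebra_simps)
  done
qed
lemma test_c:
  assumes "p \<ge> 3"
  shows "cond_exp p \<beta>0 \<gamma>0 (Xpath x1 x2 x3) \<alpha> (\<lambda>_. 0) (m_c x1 x2 x3 \<beta>0 \<gamma>0) = 0"
proof -
  obtain a b1 b2 b3 g1 g2 g3 where d: "exp \<alpha> = a" "exp (x1 \<bullet> \<beta>0) = b1" "exp (x2 \<bullet> \<beta>0) = b2" "exp (x3 \<bullet> \<beta>0) = b3"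
     "exp (\<gamma>0 (Suc 0)) = g1" "exp (\<gamma>0 2) = g2" "exp (\<gamma>0 3) = g3" by blast
  have pos: "a > 0" "b1 > 0" "b2 > 0" "b3 > 0" "g1 > 0" "g2 > 0" "g3 > 0" using d by auto
  have nz: "a \<noteq> 0" "b1 \<noteq> 0" "b2 \<noteq> 0" "b3 \<noteq> 0" "g1 \<noteq> 0" "g2 \<noteq> 0" "g3 \<noteq> 0" using pos by auto
  show ?thesis
  unfolding cond_exp_def pp[OF assms] outcomes4_list
  apply (simp add: ints hist_def m_c_def Xpath_def l1 lg1 inner_diff_left exp_add exp_diff)
  apply (simp only: d)
  apply (simp add: divide_simps ne pos nz zero_less_mult_iff)
  apply (simp add: algebra_simps)
  done
qed
theorem lemma6:
  fixes p :: nat and \<beta>0 :: "real^'k" and \<gamma>0 :: "nat \<Rightarrow> real"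
    and x1 x2 x3 :: "real^'k" and \<alpha> :: real
  assumes "p \<ge> 3"
  shows "cond_exp p \<beta>0 \<gamma>0 (Xpath x1 x2 x3) \<alpha> (\<lambda>_. 0) (m_a x1 x2 x3 \<beta>0 \<gamma>0) = 0
       \<and> cond_exp p \<beta>0 \<gamma>0 (Xpath x1 x2 x3) \<alpha> (\<lambda>_. 0) (m_b x1 x2 x3 \<beta>0 \<gamma>0) = 0
       \<and> cond_exp p \<beta>0 \<gamma>0 (Xpath x1 x2 x3) \<alpha> (\<lambda>_. 0) (m_c x1 x2 x3 \<beta>0 \<gamma>0) = 0"
  using test_a[OF assms] test_b[OF assms] test_c[OF assms] by blast

end
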